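(* Let $\sigma\colon\Sigma\to\Sigma$ be a two-sided subshift of finite type, $0<\theta<1$, $f\colon\Sigma\to\mathbb R$ Lipschitz w.r.t. $d_\theta$, and $F(x,r)=(\sigma x,r+f(x))$ on $\Sigma\times\mathbb R$. Let $K\subset\Sigma\times\mathbb R$ be compact with $\overline{\operatorname{int}(K)}=K$. If $p\in\Sigma\times\mathbb R$ satisfies $K\subset AC(p)$, then there is $N$ such that $K\subset AC_N(p)$.
   Context: $d_\theta(x,y)=\theta^{\max\{j:\ x_i=y_i\ \forall|i|<j\}}$, $f_n=\sum_{i<n}f\circ\sigma^i$. Strong stable/unstable manifolds: $(y,s)\in W^s(x,r)$ iff $y_i=x_i$ for all sufficiently large $i$ and $s-r=\lim_n(f_n(x)-f_n(y))$; $(y,s)\in W^u(x,r)$ iff $y_i=x_i$ for all sufficiently negative $i$ and $s-r=\lim_n(f_n(\sigma^{-n}y)-f_n(\sigma^{-n}x))$. $AC(p)$ is the set of points reachable from $p$ by a finite chain of points each in $W^s$ or $W^u$ of the previous one. For $n\in\mathbb Z$ and $x\in\Sigma$: $W^s_n(x)=\{y: y_i=x_i\ \forall i\ge n\}$, $W^u_n(x)=\{y: y_i=x_i\ \forall i\le -n\}$; for points of $\Sigma\times\mathbb R$, $(y,t)\in W^s_n(x,s)$ iff $(y,t)\in W^s(x,s)$ and $y\in W^s_n(x)$, and similarly for $W^u_n$. A $us$-$N$-path from $p$ to $q$ is a sequence $p=p_0,\dots,p_k=q$ with $k\le N$ and $p_{j+1}\in W^s_N(p_j)\cup W^u_N(p_j)$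 for each $j$; $AC_N(p)$ is the set of $q$ reachable from $p$ by a $us$-$N$-path. *)

theory Defs
  imports "HOL-Analysis.Analysis"
begin

definition SFT :: "nat \<Rightarrow> (nat \<Rightarrow> nat \<Rightarrow> bool) \<Rightarrow> (int \<Rightarrow> nat) set" where
  "SFT k A = {x. \<forall>i. x i < k \<and> A (x i) (x (i + 1))}"

definition shift :: "(int \<Rightarrow> nat) \<Rightarrow> (int \<Rightarrow> nat)" where
  "shift x = (\<lambda>i. x (i + 1))"

definition dtheta :: "real \<Rightarrow> (int \<Rightarrow> nat) \<Rightarrow> (int \<Rightarrow> nat) \<Rightarrow> real" where
  "dtheta \<theta> x y = (if x = y then 0
     else \<theta> ^ (GREATEST j::nat. \<forall>i. \<bar>i\<bar> < int j \<longrightarrow> x i = y i))"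

definition SigmaR_top :: "nat \<Rightarrow> (nat \<Rightarrow> nat \<Rightarrow> bool) \<Rightarrow> real \<Rightarrow> ((int \<Rightarrow> nat) \<times> real) topology" where
  "SigmaR_top k A \<theta> = prod_topology (Metric_space.mtopology (SFT k A) (dtheta \<theta>)) euclideanreal"

definition birk :: "((int \<Rightarrow> nat) \<Rightarrow> real) \<Rightarrow> nat \<Rightarrow> (int \<Rightarrow> nat) \<Rightarrow> real" where
  "birk f n x = (\<Sum>i<n. f ((shift ^^ i) x))"

definition shift_back :: "nat \<Rightarrow> (int \<Rightarrow> nat) \<Rightarrow> (int \<Rightarrow> nat)" where
  "shift_back n y = (\<lambda>i. y (i - int n))"

definition Ws :: "nat \<Rightarrow> (nat \<Rightarrow> nat \<Rightarrow> bool) \<Rightarrow> ((int \<Rightarrow> nat) \<Rightarrow> real)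
    \<Rightarrow> (int \<Rightarrow> nat) \<times> real \<Rightarrow> ((int \<Rightarrow> nat) \<times> real) set" where
  "Ws k A f p = {(y, s). y \<in> SFT k A \<and> (\<exists>m. \<forall>i\<ge>m. y i = fst p i) \<and>
      (\<lambda>n. birk f n (fst p) - birk f n y) \<longlonglongrightarrow> s - snd p}"

definition Wu :: "nat \<Rightarrow> (nat \<Rightarrow> nat \<Rightarrow> bool) \<Rightarrow> ((int \<Rightarrow> nat) \<Rightarrow> real)
    \<Rightarrow> (int \<Rightarrow> nat) \<times> real \<Rightarrow> ((int \<Rightarrow> nat) \<times> real) set" where
  "Wu k A f p = {(y, s). y \<in> SFT k A \<and> (\<exists>m. \<forall>i\<le>m. y i = fst p i) \<and>
      (\<lambda>n. birk f n (shift_back n y) - birk f n (shift_back n (fst p))) \<longlonglongrightarrow> s - snd p}"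

definition AC :: "nat \<Rightarrow> (nat \<Rightarrow> nat \<Rightarrow> bool) \<Rightarrow> ((int \<Rightarrow> nat) \<Rightarrow> real)
    \<Rightarrow> (int \<Rightarrow> nat) \<times> real \<Rightarrow> ((int \<Rightarrow> nat) \<times> real) set" where
  "AC k A f p = {q. (\<lambda>a b. b \<in> Ws k A f a \<union> Wu k A f a)\<^sup>*\<^sup>* p q}"

definition Wsn :: "nat \<Rightarrow> (nat \<Rightarrow> nat \<Rightarrow> bool) \<Rightarrow> ((int \<Rightarrow> nat) \<Rightarrow> real) \<Rightarrow> int
    \<Rightarrow> (int \<Rightarrow> nat) \<times> real \<Rightarrow> ((int \<Rightarrow> nat) \<times> real) set" where
  "Wsn k A f n p = {q. q \<in> Ws k A f p \<and> (\<forall>i\<ge>n. fst q i = fst p i)}"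

definition Wun :: "nat \<Rightarrow> (nat \<Rightarrow> nat \<Rightarrow> bool) \<Rightarrow> ((int \<Rightarrow> nat) \<Rightarrow> real) \<Rightarrow> int
    \<Rightarrow> (int \<Rightarrow> nat) \<times> real \<Rightarrow> ((int \<Rightarrow> nat) \<times> real) set" where
  "Wun k A f n p = {q. q \<in> Wu k A f p \<and> (\<forall>i\<le>-n. fst q i = fst p i)}"

definition ACN :: "nat \<Rightarrow> (nat \<Rightarrow> nat \<Rightarrow> bool) \<Rightarrow> ((int \<Rightarrow> nat) \<Rightarrow> real) \<Rightarrow> nat
    \<Rightarrow> (int \<Rightarrow> nat) \<times> real \<Rightarrow> ((int \<Rightarrow> nat) \<times> real) set" where
  "ACN k A f N p = {q. \<exists>j\<le>N.
      ((\<lambda>a b. b \<in> Wsn k A f (int N) a \<union> Wun k A f (int N) a) ^^ j) p q}"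

end

theory Submission
  imports Defs "HOL-Library.Countable" "HOL-Library.Diagonal_Subsequence"
begin


definition ag :: "nat \<Rightarrow> (int \<Rightarrow> nat) \<Rightarrow> (int \<Rightarrow> nat) \<Rightarrow> bool" where
  "ag n x y \<longleftrightarrow> (\<forall>i. \<bar>i\<bar> < int n \<longrightarrow> x i = y i)"

lemma ag_mono: "ag n x y \<Longrightarrow> m \<le> n \<Longrightarrow> ag m x y"
  unfolding ag_def by auto

lemma ag_trans: "ag n x y \<Longrightarrow> ag n y z \<Longrightarrow> ag n x z"
  unfolding ag_def by auto

lemma ag_sym: "ag n x y \<Longrightarrow> ag n y x"
  unfolding ag_def by auto

lemma ag_refl[simp]: "ag n x x"
  unfolding ag_def by auto

lemma greatest_ag:
  assumes "x \<noteq> y"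
  shows "ag (GREATEST j::nat. ag j x y) x y" "\<And>j. ag j x y \<Longrightarrow> j \<le> (GREATEST j::nat. ag j x y)"
proof -
  obtain i0 where i0: "x i0 \<noteq> y i0" using assms by auto
  have b: "\<forall>j. ag j x y \<longrightarrow> j \<le> nat \<bar>i0\<bar>"
  proof (intro allI impI)
    fix j assume "ag j x y"
    show "j \<le> nat \<bar>i0\<bar>"
    proof (rule ccontr)
      assume "\<not> j \<le> nat \<bar>i0\<bar>"
      then have "\<bar>i0\<bar> < int j" by linarith
      then show False using \<open>ag j x y\<close> i0 unfolding ag_def by blast
    qed
  qed
  show "ag (GREATEST j::nat. ag j x y) x y"
    by (rule GreatestI_nat[where k=0 and b="nat \<bar>i0\<bar>"]) (use b in \<open>auto simp: ag_def\<close>)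
  show "\<And>j. ag j x y \<Longrightarrow> j \<le> (GREATEST j::nat. ag j x y)"
    by (rule Greatest_le_nat[where b="nat \<bar>i0\<bar>"]) (use b in auto)
qed

lemma dtheta_alt: "dtheta \<theta> x y = (if x = y then 0 else \<theta> ^ (GREATEST j::nat. ag j x y))"
  unfolding dtheta_def ag_def by simp

lemma dtheta_le_iff:
  assumes "0 < \<theta>" "\<theta> < 1"
  shows "dtheta \<theta> x y \<le> \<theta> ^ n \<longleftrightarrow> ag n x y"
proof (cases "x = y")
  case True then show ?thesis using assms by (simp add: dtheta_alt)
next
  case False
  define G where "G = (GREATEST j::nat. ag j x y)"
  have g1: "ag G x y" and g2: "\<And>j. ag j x y \<Longrightarrow> j \<le> G" using greatest_ag[OF False] by (auto simp: G_def)
  have d: "dtheta \<theta> x y = \<theta> ^ G" using False by (simp add: dtheta_alt G_def)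
  have "\<theta> ^ G \<le> \<theta> ^ n \<longleftrightarrow> n \<le> G" using assms by (rule power_decreasing_iff)
  also have "\<dots> \<longleftrightarrow> ag n x y" using g1 g2 ag_mono[of G x y n] by blast
  finally show ?thesis using d by simp
qed

lemma dtheta_lt_iff:
  assumes "0 < \<theta>" "\<theta> < 1"
  shows "dtheta \<theta> x y < \<theta> ^ n \<longleftrightarrow> ag (Suc n) x y"
proof (cases "x = y")
  case True then show ?thesis using assms by (simp add: dtheta_alt)
next
  case False
  define G where "G = (GREATEST j::nat. ag j x y)"
  have g1: "ag G x y" and g2: "\<And>j. ag j x y \<Longrightarrow> j \<le> G" using greatest_ag[OF False] by (auto simp: G_def)
  have d: "dtheta \<theta> x y = \<theta> ^ G" using False by (simp add: dtheta_alt G_def)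
  have "\<theta> ^ G < \<theta> ^ n \<longleftrightarrow> Suc n \<le> G" using assms by (simp add: Suc_le_eq)
  also have "\<dots> \<longleftrightarrow> ag (Suc n) x y" using g1 g2 ag_mono[of G x y "Suc n"] by blast
  finally show ?thesis using d by simp
qed

lemma dtheta_cases: "dtheta \<theta> x y = 0 \<or> (\<exists>g. dtheta \<theta> x y = \<theta> ^ g)"
  by (auto simp: dtheta_alt)

lemma dtheta_nonneg: "0 < \<theta> \<Longrightarrow> 0 \<le> dtheta \<theta> x y"
  by (simp add: dtheta_alt)

lemma dtheta_sym: "dtheta \<theta> x y = dtheta \<theta> y x"
proof -
  have "ag j x y = ag j y x" for j using ag_sym by blast
  then show ?thesis unfolding dtheta_alt by (simp add: eq_commute[of x y])
qed

lemma dtheta_tri_aux: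
  assumes "0 < \<theta>" "\<theta> < 1" "dtheta \<theta> y z \<le> dtheta \<theta> x y"
  shows "dtheta \<theta> x z \<le> dtheta \<theta> x y"
proof (cases "x = y")
  case True then show ?thesis using assms(3) by simp
next
  case False
  then obtain g where g: "dtheta \<theta> x y = \<theta> ^ g" by (auto simp: dtheta_alt)
  have "ag g x y" using g dtheta_le_iff[OF assms(1,2), of x y g] by simp
  moreover have "ag g y z" using assms(3) g dtheta_le_iff[OF assms(1,2), of y z g] by simp
  ultimately have "ag g x z" by (rule ag_trans)
  then show ?thesis using g dtheta_le_iff[OF assms(1,2), of x z g] by simp
qed

lemma dtheta_metric:
  assumes "0 < \<theta>" "\<theta> < 1"
  shows "Metric_space M (dtheta \<theta>)"
proof
  fix x y z
  show "0 \<le> dtheta \<theta> x y" by (rule dtheta_nonneg[OF assms(1)])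
  show "dtheta \<theta> x y = dtheta \<theta> y x" by (rule dtheta_sym)
  show "dtheta \<theta> x y = 0 \<longleftrightarrow> x = y" using assms by (simp add: dtheta_alt)
  show "dtheta \<theta> x z \<le> dtheta \<theta> x y + dtheta \<theta> y z"
  proof (cases "dtheta \<theta> y z \<le> dtheta \<theta> x y")
    case True
    then show ?thesis using dtheta_tri_aux[OF assms True] dtheta_nonneg[OF assms(1), of y z] by linarith
  next
    case False
    then have "dtheta \<theta> y x \<le> dtheta \<theta> z y" using dtheta_sym by (metis linorder_le_cases)
    then have "dtheta \<theta> z x \<le> dtheta \<theta> z y" by (rule dtheta_tri_aux[OF assms])
    then show ?thesis using dtheta_nonneg[OF assms(1), of x y] dtheta_sym[of \<theta> x z] dtheta_sym[of \<theta> z y] by linarith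
  qed
qed



locale ctx =
  fixes k :: nat and A :: "nat \<Rightarrow> nat \<Rightarrow> bool" and \<theta> :: real and f :: "(int \<Rightarrow> nat) \<Rightarrow> real" and C :: real
  assumes th0: "0 < \<theta>" and th1: "\<theta> < 1" and C0: "0 \<le> C"
    and lip: "\<And>x y. x \<in> SFT k A \<Longrightarrow> y \<in> SFT k A \<Longrightarrow> \<bar>f x - f y\<bar> \<le> C * dtheta \<theta> x y"
begin

interpretation MS: Metric_space "SFT k A" "dtheta \<theta>"
  by (rule dtheta_metric[OF th0 th1])

definition cyl :: "nat \<Rightarrow> (int \<Rightarrow> nat) \<Rightarrow> real \<Rightarrow> real \<Rightarrow> ((int \<Rightarrow> nat) \<times> real) set" where
  "cyl n x e t = {y \<in> SFT k A. ag n x y} \<times> {s. \<bar>s - t\<bar> < e}"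

lemma topX: "topspace (SigmaR_top k A \<theta>) = SFT k A \<times> UNIV"
  by (simp add: SigmaR_top_def)

lemma open_agset: "openin MS.mtopology {y \<in> SFT k A. ag n x y}"
  unfolding MS.openin_mtopology
proof (intro conjI allI impI)
  fix y assume y: "y \<in> {y \<in> SFT k A. ag n x y}"
  show "\<exists>r>0. MS.mball y r \<subseteq> {y \<in> SFT k A. ag n x y}"
  proof (intro exI conjI)
    show "0 < \<theta> ^ n" using th0 by simp
    show "MS.mball y (\<theta> ^ n) \<subseteq> {y \<in> SFT k A. ag n x y}"
    proof
      fix z assume "z \<in> MS.mball y (\<theta> ^ n)"
      then have "z \<in> SFT k A" "ag (Suc n) y z" using dtheta_lt_iff[OF th0 th1] by auto
      then show "z \<in> {y \<in> SFT k A. ag n x y}" using y ag_trans ag_mono by (metis (mono_tags, lifting) le_SucI mem_Collect_eq order_refl)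
    qed
  qed
qed auto

lemma open_cyl: "openin (SigmaR_top k A \<theta>) (cyl n x e t)"
proof -
  have "open {s::real. \<bar>s - t\<bar> < e}"
  proof -
    have "{s::real. \<bar>s - t\<bar> < e} = ball t e" by (auto simp: dist_real_def)
    then show ?thesis by simp
  qed
  then show ?thesis
    unfolding cyl_def SigmaR_top_def using open_agset
    by (simp add: openin_prod_Times_iff)
qed

lemma open_has_cyl:
  assumes "openin (SigmaR_top k A \<theta>) U" "q \<in> U"
  shows "\<exists>n e. 0 < e \<and> cyl n (fst q) e (snd q) \<subseteq> U"
proof -
  obtain V W where VW: "openin MS.mtopology V" "openin euclideanreal W" "fst q \<in> V" "snd q \<in> W" "V \<times> W \<subseteq> U"
    using assms unfolding SigmaR_top_def openin_prod_topology_alt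
    by (metis prod.collapse)
  obtain r where r: "r > 0" "MS.mball (fst q) r \<subseteq> V" using VW MS.openin_mtopology by meson
  obtain n where n: "\<theta> ^ n < r" using real_arch_pow_inv[OF r(1) th1] by blast
  obtain e where e: "e > 0" "ball (snd q) e \<subseteq> W" using VW by (meson open_contains_ball open_openin)
  have "fst q \<in> SFT k A" using VW MS.openin_mtopology by blast
  have "cyl (Suc n) (fst q) e (snd q) \<subseteq> V \<times> W"
  proof
    fix z assume z: "z \<in> cyl (Suc n) (fst q) e (snd q)"
    then have "dtheta \<theta> (fst q) (fst z) < \<theta> ^ n" "fst z \<in> SFT k A"
      using dtheta_lt_iff[OF th0 th1] by (auto simp: cyl_def)
    then have "fst z \<in> V" using r n \<open>fst q \<in> SFT k A\<close> by auto
    moreover have "snd z \<in> W" using z e by (auto simp: cyl_def dist_real_def abs_minus_commute)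
    ultimately show "z \<in> V \<times> W" by (simp add: mem_Times_iff)
  qed
  then show ?thesis using VW e by blast
qed

lemma Hausdorff_X: "Hausdorff_space (SigmaR_top k A \<theta>)"
  unfolding SigmaR_top_def
  by (simp add: Hausdorff_space_prod_topology MS.Hausdorff_space_mtopology)

lemma closed_crit:
  assumes sub: "B \<subseteq> SFT k A \<times> UNIV"
    and crit: "\<And>q. q \<in> SFT k A \<times> UNIV \<Longrightarrow>
       (\<And>n. \<exists>q'\<in>B. ag n (fst q) (fst q') \<and> \<bar>snd q' - snd q\<bar> < 1 / (real n + 1)) \<Longrightarrow> q \<in> B"
  shows "closedin (SigmaR_top k A \<theta>) B"
  unfolding closedin_def topX
proof (intro conjI sub)
  show "openin (SigmaR_top k A \<theta>) (SFT k A \<times> UNIV - B)"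
  proof (subst openin_subopen, intro ballI)
    fix q assume q: "q \<in> SFT k A \<times> UNIV - B"
    then obtain n where n: "\<forall>q'\<in>B. \<not> (ag n (fst q) (fst q') \<and> \<bar>snd q' - snd q\<bar> < 1 / (real n + 1))"
      using crit by blast
    show "\<exists>T. openin (SigmaR_top k A \<theta>) T \<and> q \<in> T \<and> T \<subseteq> SFT k A \<times> UNIV - B"
    proof (intro exI conjI)
      show "openin (SigmaR_top k A \<theta>) (cyl n (fst q) (1 / (real n + 1)) (snd q))" by (rule open_cyl)
      show "q \<in> cyl n (fst q) (1 / (real n + 1)) (snd q)" using q by (auto simp: cyl_def mem_Times_iff)
      show "cyl n (fst q) (1 / (real n + 1)) (snd q) \<subseteq> SFT k A \<times> UNIV - B"
        using n by (auto simp: cyl_def)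
    qed
  qed
qed

end


lemma shift_pow: "(shift ^^ j) x = (\<lambda>i. x (i + int j))"
  by (induction j arbitrary: x) (auto simp: shift_def add.assoc)

lemma translate_SFT:
  assumes "x \<in> SFT k A" shows "(\<lambda>i. x (i + c)) \<in> SFT k A"
  unfolding SFT_def
proof (intro CollectI allI)
  fix i
  have "x (i + c) < k \<and> A (x (i + c)) (x (i + c + 1))" using assms unfolding SFT_def by blast
  moreover have eq: "x (i + 1 + c) = x (i + c + 1)" by (simp add: ac_simps)
  ultimately show "x (i + c) < k \<and> A (x (i + c)) (x (i + 1 + c))" by (metis eq)
qed

lemma shift_pow_SFT: "x \<in> SFT k A \<Longrightarrow> (shift ^^ j) x \<in> SFT k A"
  unfolding shift_pow by (rule translate_SFT)

lemma shift_back_SFT: "x \<in> SFT k A \<Longrightarrow> shift_back n x \<in> SFT k A"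
  unfolding shift_back_def using translate_SFT[of x k A "- int n"] by simp

lemma birk_back: "birk f n (shift_back n y) = (\<Sum>l<n. f (shift_back (Suc l) y))"
proof -
  have "birk f n (shift_back n y) = (\<Sum>j<n. f (shift_back (n - j) y))"
    unfolding birk_def
    by (intro sum.cong refl) (auto simp: shift_pow shift_back_def of_nat_diff algebra_simps)
  also have "\<dots> = (\<Sum>j<n. (\<lambda>l. f (shift_back (Suc l) y)) (n - Suc j))"
    by (intro sum.cong refl) (auto simp: Suc_diff_Suc)
  also have "\<dots> = (\<Sum>l<n. f (shift_back (Suc l) y))"
    by (rule sum.nat_diff_reindex)
  finally show ?thesis .
qed

lemma pow_nat_bound:
  fixes \<theta> :: real
  assumes "0 < \<theta>" "\<theta> < 1"
  shows "\<theta> ^ nat (int j - m) \<le> \<theta> ^ j / \<theta> ^ nat m"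
proof -
  have "j \<le> nat (int j - m) + nat m" by auto
  then have "\<theta> ^ (nat (int j - m) + nat m) \<le> \<theta> ^ j"
    by (rule power_decreasing) (use assms in auto)
  then show ?thesis using assms by (simp add: power_add field_simps)
qed

context ctx
begin

definition Ds :: "(int \<Rightarrow> nat) \<Rightarrow> (int \<Rightarrow> nat) \<Rightarrow> real" where
  "Ds x y = (\<Sum>j. f ((shift ^^ j) x) - f ((shift ^^ j) y))"

definition Du :: "(int \<Rightarrow> nat) \<Rightarrow> (int \<Rightarrow> nat) \<Rightarrow> real" where
  "Du x y = (\<Sum>j. f (shift_back (Suc j) y) - f (shift_back (Suc j) x))"

lemma lip_ag: "x \<in> SFT k A \<Longrightarrow> y \<in> SFT k A \<Longrightarrow> ag n x y \<Longrightarrow> \<bar>f x - f y\<bar> \<le> C * \<theta> ^ n"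
  using lip[of x y] dtheta_le_iff[OF th0 th1, of x y n] C0
  by (meson mult_left_mono order_trans)

lemma GS:
  fixes g :: "nat \<Rightarrow> real"
  assumes b: "\<And>j. \<bar>g j\<bar> \<le> C * \<theta> ^ nat (int j - m)"
  shows "summable g" "(\<lambda>n. \<Sum>j<n. g j) \<longlonglongrightarrow> suminf g"
    and "m \<le> 0 \<Longrightarrow> \<bar>suminf g\<bar> \<le> C * \<theta> ^ nat (- m) / (1 - \<theta>)"
proof -
  have b2: "\<bar>g j\<bar> \<le> (C / \<theta> ^ nat m) * \<theta> ^ j" for j
  proof -
    have "C * \<theta> ^ nat (int j - m) \<le> C * (\<theta> ^ j / \<theta> ^ nat m)"
      using pow_nat_bound[OF th0 th1] C0 by (intro mult_left_mono) auto
    then show ?thesis using b[of j] by simp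
  qed
  have sg: "summable (\<lambda>j. (C / \<theta> ^ nat m) * \<theta> ^ j)"
    using th0 th1 by (intro summable_mult summable_geometric) auto
  show sm: "summable g"
    by (rule summable_rabs_cancel, rule summable_comparison_test[OF _ sg]) (use b2 in auto)
  show "(\<lambda>n. \<Sum>j<n. g j) \<longlonglongrightarrow> suminf g" using summable_LIMSEQ[OF sm] .
  assume m: "m \<le> 0"
  have b3: "\<bar>g j\<bar> \<le> (C * \<theta> ^ nat (- m)) * \<theta> ^ j" for j
  proof -
    have "nat (int j - m) = j + nat (- m)" using m by auto
    then show ?thesis using b[of j] by (simp add: power_add mult_ac)
  qed
  have sg3: "summable (\<lambda>j. (C * \<theta> ^ nat (- m)) * \<theta> ^ j)"
    using th0 th1 by (intro summable_mult summable_geometric) auto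
  have sa: "summable (\<lambda>j. \<bar>g j\<bar>)"
    by (rule summable_comparison_test[OF _ sg3]) (use b3 in auto)
  have "\<bar>suminf g\<bar> \<le> (\<Sum>j. \<bar>g j\<bar>)" by (rule summable_rabs[OF sa])
  also have "\<dots> \<le> (\<Sum>j. (C * \<theta> ^ nat (- m)) * \<theta> ^ j)"
    by (rule suminf_le[OF _ sa sg3]) (use b3 in auto)
  also have "\<dots> = C * \<theta> ^ nat (- m) / (1 - \<theta>)"
    using th0 th1 by (simp add: suminf_mult suminf_geometric divide_simps)
  finally show "\<bar>suminf g\<bar> \<le> C * \<theta> ^ nat (- m) / (1 - \<theta>)" .
qed

lemma stable_term:
  assumes "x \<in> SFT k A" "y \<in> SFT k A" "\<And>i. i \<ge> m \<Longrightarrow> x i = y i"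
  shows "\<bar>f ((shift ^^ j) x) - f ((shift ^^ j) y)\<bar> \<le> C * \<theta> ^ nat (int j - m)"
proof (rule lip_ag)
  show "ag (nat (int j - m)) ((shift ^^ j) x) ((shift ^^ j) y)"
    unfolding ag_def shift_pow using assms(3) by auto
qed (use assms shift_pow_SFT in auto)

lemma unstable_term:
  assumes "x \<in> SFT k A" "y \<in> SFT k A" "\<And>i. i \<le> m \<Longrightarrow> x i = y i"
  shows "\<bar>f (shift_back (Suc j) y) - f (shift_back (Suc j) x)\<bar> \<le> C * \<theta> ^ nat (int j - (- m - 1))"
proof (rule lip_ag)
  show "ag (nat (int j - (- m - 1))) (shift_back (Suc j) y) (shift_back (Suc j) x)"
    unfolding ag_def shift_back_def using assms(3) by (auto intro!: sym[of "x _"])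
qed (use assms shift_back_SFT in auto)

lemma Ds_conv:
  assumes "x \<in> SFT k A" "y \<in> SFT k A" "\<And>i. i \<ge> m \<Longrightarrow> x i = y i"
  shows "(\<lambda>n. birk f n x - birk f n y) \<longlonglongrightarrow> Ds x y"
proof -
  have "(\<lambda>n. birk f n x - birk f n y) = (\<lambda>n. \<Sum>j<n. f ((shift ^^ j) x) - f ((shift ^^ j) y))"
    unfolding birk_def by (simp add: sum_subtractf)
  then show ?thesis unfolding Ds_def using GS(2)[OF stable_term[OF assms]] by simp
qed

lemma Ds_bound:
  assumes "x \<in> SFT k A" "y \<in> SFT k A" "\<And>i. i \<ge> m \<Longrightarrow> x i = y i" "m \<le> 0"
  shows "\<bar>Ds x y\<bar> \<le> C * \<theta> ^ nat (- m) / (1 - \<theta>)"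
  unfolding Ds_def using GS(3)[OF stable_term[OF assms(1-3)] assms(4)] .

lemma Du_conv:
  assumes "x \<in> SFT k A" "y \<in> SFT k A" "\<And>i. i \<le> m \<Longrightarrow> x i = y i"
  shows "(\<lambda>n. birk f n (shift_back n y) - birk f n (shift_back n x)) \<longlonglongrightarrow> Du x y"
proof -
  have "(\<lambda>n. birk f n (shift_back n y) - birk f n (shift_back n x)) =
      (\<lambda>n. \<Sum>j<n. f (shift_back (Suc j) y) - f (shift_back (Suc j) x))"
    unfolding birk_back by (simp add: sum_subtractf)
  then show ?thesis unfolding Du_def using GS(2)[OF unstable_term[OF assms]] by simp
qed

lemma Du_bound:
  assumes "x \<in> SFT k A" "y \<in> SFT k A" "\<And>i. i \<le> m \<Longrightarrow> x i = y i" "- m - 1 \<le> 0"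
  shows "\<bar>Du x y\<bar> \<le> C * \<theta> ^ nat (m + 1) / (1 - \<theta>)"
  unfolding Du_def using GS(3)[OF unstable_term[OF assms(1-3)] assms(4)] by (simp add: add.commute)

end


definition rel :: "nat \<Rightarrow> (nat \<Rightarrow> nat \<Rightarrow> bool) \<Rightarrow> ((int \<Rightarrow> nat) \<Rightarrow> real)
    \<Rightarrow> (int \<Rightarrow> nat) \<times> real \<Rightarrow> (int \<Rightarrow> nat) \<times> real \<Rightarrow> bool" where
  "rel k A f = (\<lambda>a b. b \<in> Ws k A f a \<union> Wu k A f a)"

definition stp :: "nat \<Rightarrow> (nat \<Rightarrow> nat \<Rightarrow> bool) \<Rightarrow> ((int \<Rightarrow> nat) \<Rightarrow> real) \<Rightarrow> nat
    \<Rightarrow> (int \<Rightarrow> nat) \<times> real \<Rightarrow> (int \<Rightarrow> nat) \<times> real \<Rightarrow> bool" where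
  "stp k A f M = (\<lambda>a b. b \<in> Wsn k A f (int M) a \<union> Wun k A f (int M) a)"

definition tr :: "real \<Rightarrow> (int \<Rightarrow> nat) \<times> real \<Rightarrow> (int \<Rightarrow> nat) \<times> real" where
  "tr \<tau> a = (fst a, snd a + \<tau>)"

lemma AC_alt: "AC k A f p = {q. (rel k A f)\<^sup>*\<^sup>* p q}"
  unfolding AC_def rel_def by simp

lemma ACN_alt: "ACN k A f N p = {q. \<exists>j\<le>N. (stp k A f N ^^ j) p q}"
  unfolding ACN_def stp_def by simp

lemma rel_S: "rel k A f a b \<Longrightarrow> fst b \<in> SFT k A"
  unfolding rel_def Ws_def Wu_def by auto

lemma stp_S: "stp k A f M a b \<Longrightarrow> fst b \<in> SFT k A"
  unfolding stp_def Wsn_def Wun_def Ws_def Wu_def by auto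

lemma stp_rel: "stp k A f M a b \<Longrightarrow> rel k A f a b"
  unfolding stp_def rel_def Wsn_def Wun_def by auto

lemma rel_sym:
  assumes "fst a \<in> SFT k A" "rel k A f a b"
  shows "rel k A f b a"
proof -
  obtain x r y s where ab: "a = (x, r)" "b = (y, s)" by fastforce
  from assms(2) consider "b \<in> Ws k A f a" | "b \<in> Wu k A f a" unfolding rel_def by auto
  then show ?thesis
  proof cases
    case 1
    then obtain m where m: "\<forall>i\<ge>m. y i = x i" and l: "(\<lambda>n. birk f n x - birk f n y) \<longlonglongrightarrow> s - r"
      by (auto simp: Ws_def ab)
    have "(\<lambda>n. - (birk f n x - birk f n y)) \<longlonglongrightarrow> - (s - r)" by (rule tendsto_minus[OF l])
    then have "(\<lambda>n. birk f n y - birk f n x) \<longlonglongrightarrow> r - s" by simp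
    moreover have "\<exists>m. \<forall>i\<ge>m. x i = y i" using m by (intro exI[of _ m]) auto
    ultimately have "a \<in> Ws k A f b" using assms(1) by (simp add: Ws_def ab)
    then show ?thesis by (simp add: rel_def)
  next
    case 2
    then obtain m where m: "\<forall>i\<le>m. y i = x i" and
      l: "(\<lambda>n. birk f n (shift_back n y) - birk f n (shift_back n x)) \<longlonglongrightarrow> s - r"
      by (auto simp: Wu_def ab)
    have "(\<lambda>n. - (birk f n (shift_back n y) - birk f n (shift_back n x))) \<longlonglongrightarrow> - (s - r)"
      by (rule tendsto_minus[OF l])
    then have "(\<lambda>n. birk f n (shift_back n x) - birk f n (shift_back n y)) \<longlonglongrightarrow> r - s" by simp
    moreover have "\<exists>m. \<forall>i\<le>m. x i = y i" using m by (intro exI[of _ m]) auto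
    ultimately have "a \<in> Wu k A f b" using assms(1) by (simp add: Wu_def ab)
    then show ?thesis by (simp add: rel_def)
  qed
qed

lemma rel_rtr_sym:
  assumes "fst p \<in> SFT k A" "(rel k A f)\<^sup>*\<^sup>* p q"
  shows "(rel k A f)\<^sup>*\<^sup>* q p"
proof -
  have "fst q \<in> SFT k A \<and> (rel k A f)\<^sup>*\<^sup>* q p" using assms(2)
  proof (induction rule: rtranclp_induct)
    case base then show ?case using assms(1) by simp
  next
    case (step b c)
    then have "rel k A f c b" using rel_sym by blast
    then show ?case using step rel_S by (metis converse_rtranclp_into_rtranclp)
  qed
  then show ?thesis by simp
qed

lemma rel_tr: "rel k A f a b \<Longrightarrow> rel k A f (tr \<tau> a) (tr \<tau> b)"
  unfolding rel_def Ws_def Wu_def tr_def by (auto split: prod.splits)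

lemma stp_tr: "stp k A f M a b \<Longrightarrow> stp k A f M (tr \<tau> a) (tr \<tau> b)"
  unfolding stp_def Wsn_def Wun_def Ws_def Wu_def tr_def by (auto split: prod.splits)

lemma stp_pow_tr: "(stp k A f M ^^ j) a b \<Longrightarrow> (stp k A f M ^^ j) (tr \<tau> a) (tr \<tau> b)"
proof (induction j arbitrary: b)
  case 0 then show ?case by simp
next
  case (Suc j)
  then obtain c where "(stp k A f M ^^ j) a c" "stp k A f M c b" by (meson relpowp_Suc_E)
  then show ?case using Suc.IH stp_tr by (meson relpowp_Suc_I)
qed

lemma stp_mono: "M \<le> M' \<Longrightarrow> stp k A f M a b \<Longrightarrow> stp k A f M' a b"
  unfolding stp_def Wsn_def Wun_def by auto

lemma pow_mono:
  fixes R R' :: "'a \<Rightarrow> 'a \<Rightarrow> bool"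
  shows "(\<And>u v. R u v \<Longrightarrow> R' u v) \<Longrightarrow> (R ^^ j) a b \<Longrightarrow> (R' ^^ j) a b"
proof (induction j arbitrary: b)
  case 0
  then show ?case by (metis relpowp_0_E relpowp_0_I)
next
  case (Suc j)
  then obtain c where "(R ^^ j) a c" "R c b" by (meson relpowp_Suc_E)
  then show ?case using Suc by (meson relpowp_Suc_I)
qed

lemma stp_pow_mono: "M \<le> M' \<Longrightarrow> (stp k A f M ^^ j) a b \<Longrightarrow> (stp k A f M' ^^ j) a b"
  by (rule pow_mono[where R="stp k A f M"]) (auto intro: stp_mono)

lemma stp_refl:
  assumes "fst a \<in> SFT k A" shows "stp k A f M a a"
proof -
  have "a \<in> Wsn k A f (int M) a"
    using assms by (auto simp: Wsn_def Ws_def case_prod_unfold)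
  then show ?thesis by (simp add: stp_def)
qed

lemma stp_pow_S: "fst a \<in> SFT k A \<Longrightarrow> (stp k A f M ^^ j) a b \<Longrightarrow> fst b \<in> SFT k A"
  by (cases j) (auto dest: stp_S elim: relpowp_Suc_E)

lemma stp_pow_refl: "fst a \<in> SFT k A \<Longrightarrow> (stp k A f M ^^ j) a a"
proof (induction j)
  case 0 then show ?case by simp
next
  case (Suc j) then show ?case using stp_refl by (meson relpowp_Suc_I)
qed

lemma stp_pad:
  assumes "fst a \<in> SFT k A" "(stp k A f M ^^ j) a b" "j \<le> N"
  shows "(stp k A f M ^^ N) a b"
proof -
  have "(stp k A f M ^^ (j + (N - j))) a b"
    unfolding relpowp_add using assms stp_pow_refl stp_pow_S by (metis relcomppI)
  then show ?thesis using assms(3) by simp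
qed

lemma stp_pow_rel: "(stp k A f M ^^ j) a b \<Longrightarrow> (rel k A f)\<^sup>*\<^sup>* a b"
proof (induction j arbitrary: b)
  case 0
  then have "a = b" by (meson relpowp_0_E)
  then show ?case by simp
next
  case (Suc j)
  then obtain c where "(stp k A f M ^^ j) a c" "stp k A f M c b" by (meson relpowp_Suc_E)
  then show ?case using Suc.IH stp_rel by (meson rtranclp.rtrancl_into_rtrancl)
qed

lemma rel_stp: "rel k A f a b \<Longrightarrow> \<exists>M. stp k A f M a b"
proof -
  assume "rel k A f a b"
  then consider "b \<in> Ws k A f a" | "b \<in> Wu k A f a" unfolding rel_def by auto
  then show ?thesis
  proof cases
    case 1
    then obtain m where m: "\<forall>i\<ge>m. fst b i = fst a i" by (auto simp: Ws_def split: prod.splits)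
    have "b \<in> Wsn k A f (int (nat \<bar>m\<bar>)) a" using 1 m by (auto simp: Wsn_def)
    then show ?thesis unfolding stp_def by blast
  next
    case 2
    then obtain m where m: "\<forall>i\<le>m. fst b i = fst a i" by (auto simp: Wu_def split: prod.splits)
    have "b \<in> Wun k A f (int (nat \<bar>m\<bar>)) a" using 2 m by (auto simp: Wun_def)
    then show ?thesis unfolding stp_def by blast
  qed
qed

lemma rtr_stp: "(rel k A f)\<^sup>*\<^sup>* a b \<Longrightarrow> \<exists>M j. (stp k A f M ^^ j) a b"
proof (induction rule: rtranclp_induct)
  case base then show ?case by (meson relpowp_0_I)
next
  case (step b c)
  then obtain M j where Mj: "(stp k A f M ^^ j) a b" by blast
  obtain M' where M': "stp k A f M' b c" using step rel_stp by blast
  have "(stp k A f (max M M') ^^ j) a b" using Mj stp_pow_mono by (metis max.cobounded1)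
  moreover have "stp k A f (max M M') b c" using M' stp_mono by (metis max.cobounded2)
  ultimately show ?case by (meson relpowp_Suc_I)
qed



lemma Wsn_iff: "b \<in> Wsn k A f M a \<longleftrightarrow> fst b \<in> SFT k A \<and> (\<exists>m. \<forall>i\<ge>m. fst b i = fst a i) \<and>
   (\<lambda>n. birk f n (fst a) - birk f n (fst b)) \<longlonglongrightarrow> snd b - snd a \<and> (\<forall>i\<ge>M. fst b i = fst a i)"
  unfolding Wsn_def Ws_def by (cases b) auto

lemma Wun_iff: "b \<in> Wun k A f M a \<longleftrightarrow> fst b \<in> SFT k A \<and> (\<exists>m. \<forall>i\<le>m. fst b i = fst a i) \<and>
   (\<lambda>n. birk f n (shift_back n (fst b)) - birk f n (shift_back n (fst a))) \<longlonglongrightarrow> snd b - snd a \<and>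
   (\<forall>i\<le>-M. fst b i = fst a i)"
  unfolding Wun_def Wu_def by (cases b) auto

lemma diag_nat:
  fixes W :: "nat \<Rightarrow> nat \<Rightarrow> nat" and B :: "nat \<Rightarrow> nat"
  assumes bd: "\<And>m n. W m n < B n"
  shows "\<exists>r. strict_mono r \<and> (\<forall>n. \<exists>v. eventually (\<lambda>m. W (r m) n = v) sequentially)"
proof -
  interpret subseqs "\<lambda>n s. \<exists>v. eventually (\<lambda>m. W (s m) n = v) sequentially"
  proof
    fix n and s :: "nat \<Rightarrow> nat" assume "strict_mono s"
    have "\<exists>v. infinite {m. W (s m) n = v}"
    proof (rule ccontr)
      assume "\<not> ?thesis"
      then have fin: "\<And>v. finite {m. W (s m) n = v}" by blast
      have "m \<in> (\<Union>v\<in>{..<B n}. {m. W (s m) n = v})" for m using bd[of "s m" n] by blast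
      then have "(UNIV :: nat set) \<subseteq> (\<Union>v\<in>{..<B n}. {m. W (s m) n = v})" by blast
      moreover have "finite (\<Union>v\<in>{..<B n}. {m. W (s m) n = v})"
        by (rule finite_UN_I[OF finite_lessThan fin])
      ultimately show False using finite_subset infinite_UNIV_nat by blast
    qed
    then obtain v where v: "infinite {m. W (s m) n = v}" by blast
    let ?E = "enumerate {m. W (s m) n = v}"
    have "strict_mono ?E" using v by (rule strict_mono_enumerate)
    moreover have "W (s (?E m)) n = v" for m using enumerate_in_set[OF v, of m] by simp
    ultimately show "\<exists>r'. strict_mono r' \<and> (\<exists>v. eventually (\<lambda>m. W ((s \<circ> r') m) n = v) sequentially)"
      by (intro exI[of _ ?E] conjI exI[of _ v]) (auto intro: always_eventually)
  qed
  have stable: "\<And>r s n. strict_mono r \<Longrightarrow> (\<exists>v. eventually (\<lambda>m. W (s m) n = v) sequentially) \<Longrightarrow>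
      (\<exists>v. eventually (\<lambda>m. W ((s \<circ> r) m) n = v) sequentially)"
  proof -
    fix r s n assume r: "strict_mono (r::nat\<Rightarrow>nat)" and "\<exists>v. eventually (\<lambda>m. W (s m) n = v) sequentially"
    then obtain v where "eventually (\<lambda>m. W (s m) n = v) sequentially" by blast
    then have "eventually (\<lambda>m. W (s (r m)) n = v) sequentially" by (rule eventually_subseq[OF r])
    then show "\<exists>v. eventually (\<lambda>m. W ((s \<circ> r) m) n = v) sequentially" by auto
  qed
  have "\<exists>v. eventually (\<lambda>m. W (diagseq m) n = v) sequentially" for n
  proof -
    obtain v where "eventually (\<lambda>m. W ((diagseq \<circ> (+) (Suc n)) m) n = v) sequentially"
      using diagseq_holds[OF stable, of n] by blast
    then have "eventually (\<lambda>m. W (diagseq (m + Suc n)) n = v) sequentially" by (simp add: add.commute)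
    then show ?thesis using eventually_sequentially_seg by blast
  qed
  then show ?thesis using subseq_diagseq by blast
qed

lemma diag_countable:
  fixes W :: "nat \<Rightarrow> 'c::countable \<Rightarrow> nat"
  assumes "\<And>m c. W m c < B c"
  shows "\<exists>r. strict_mono r \<and> (\<forall>c. \<exists>v. eventually (\<lambda>m. W (r m) c = v) sequentially)"
proof -
  obtain r where r: "strict_mono r" "\<forall>n. \<exists>v. eventually (\<lambda>m. W (r m) (from_nat n) = v) sequentially"
    using diag_nat[of "\<lambda>m n. W m (from_nat n)" "\<lambda>n. B (from_nat n)"] assms by blast
  have "\<exists>v. eventually (\<lambda>m. W (r m) c = v) sequentially" for c
    using r(2)[rule_format, of "to_nat c"] by simp
  then show ?thesis using r(1) by blast
qed

lemma finite_abs_lt: "finite {i::int. \<bar>i\<bar> < int n}"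
  by (rule finite_subset[of _ "{- int n..int n}"]) auto

lemma ev_ag:
  assumes "\<And>i. eventually (\<lambda>m. x m i = y i) sequentially"
  shows "eventually (\<lambda>m. ag n (x m) y) sequentially"
proof -
  have "eventually (\<lambda>m. \<forall>i\<in>{i::int. \<bar>i\<bar> < int n}. x m i = y i) sequentially"
    by (rule eventually_ball_finite[OF finite_abs_lt]) (use assms in blast)
  then show ?thesis by (rule eventually_mono) (auto simp: ag_def)
qed

lemma pw_SFT:
  assumes "\<And>i. eventually (\<lambda>m. x m i = y i) sequentially" "\<And>m. x m \<in> SFT k A"
  shows "y \<in> SFT k A"
  unfolding SFT_def
proof (intro CollectI allI)
  fix i
  have "eventually (\<lambda>m. x m i = y i \<and> x m (i + 1) = y (i + 1)) sequentially"
    using assms(1)[of i] assms(1)[of "i+1"] by (rule eventually_conj)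
  then obtain N0 where "\<forall>m\<ge>N0. x m i = y i \<and> x m (i + 1) = y (i + 1)"
    unfolding eventually_sequentially by blast
  then obtain m where "x m i = y i" "x m (i + 1) = y (i + 1)" by blast
  moreover have "x m i < k \<and> A (x m i) (x m (i + 1))" using assms(2)[of m] by (simp add: SFT_def)
  ultimately show "y i < k \<and> A (y i) (y (i + 1))" by simp
qed

context ctx
begin

lemma f_pw:
  assumes "\<And>i. eventually (\<lambda>m. x m i = y i) sequentially" "\<And>m. x m \<in> SFT k A" "y \<in> SFT k A"
  shows "(\<lambda>m. f (x m)) \<longlonglongrightarrow> f y"
proof (rule tendstoI)
  fix e :: real assume e: "e > 0"
  obtain n where n: "\<theta> ^ n < e / (C + 1)" using real_arch_pow_inv[of "e / (C + 1)" \<theta>] e C0 th1 by auto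
  have "C * \<theta> ^ n < e"
  proof -
    have "C * \<theta> ^ n \<le> (C + 1) * \<theta> ^ n" using th0 by simp
    also have "\<dots> < (C + 1) * (e / (C + 1))" using n C0 by (intro mult_strict_left_mono) auto
    also have "\<dots> = e" using C0 by simp
    finally show ?thesis .
  qed
  note lt = this
  show "eventually (\<lambda>m. dist (f (x m)) (f y) < e) sequentially"
    using ev_ag[OF assms(1), of n]
  proof (rule eventually_mono)
    fix m assume "ag n (x m) y"
    then have "\<bar>f (x m) - f y\<bar> \<le> C * \<theta> ^ n" by (rule lip_ag[OF assms(2) assms(3)])
    then show "dist (f (x m)) (f y) < e" using lt by (simp add: dist_real_def)
  qed
qed

lemma series_cont:
  fixes a :: "nat \<Rightarrow> nat \<Rightarrow> real"
  assumes lim: "\<And>j. (\<lambda>m. a j m) \<longlonglongrightarrow> b j"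
    and bd: "eventually (\<lambda>m. \<forall>j. \<bar>a j m\<bar> \<le> C * \<theta> ^ nat (int j - m0)) sequentially"
  shows "(\<lambda>m. \<Sum>j. a j m) \<longlonglongrightarrow> (\<Sum>j. b j)"
proof -
  have sM: "summable (\<lambda>j. C * \<theta> ^ nat (int j - m0))"
    by (rule GS(1)[of _ m0]) (use C0 th0 in simp)
  have bd2: "eventually (\<lambda>(j, m). norm (a j m) \<le> C * \<theta> ^ nat (int j - m0)) (at_top \<times>\<^sub>F sequentially)"
  proof -
    have "eventually (\<lambda>(j::nat, m). \<forall>j. \<bar>a j m\<bar> \<le> C * \<theta> ^ nat (int j - m0)) (at_top \<times>\<^sub>F sequentially)"
      by (subst eventually_prod2) (simp_all add: bd)
    then show ?thesis by (rule eventually_mono) auto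
  qed
  show ?thesis using tannerys_theorem[OF lim bd2 sM] by simp
qed

lemma Ds_cont:
  assumes "\<And>m. x m \<in> SFT k A" "\<And>m. y m \<in> SFT k A" "x0 \<in> SFT k A" "y0 \<in> SFT k A"
    and "\<And>i. eventually (\<lambda>m. x m i = x0 i) sequentially" "\<And>i. eventually (\<lambda>m. y m i = y0 i) sequentially"
    and ag: "eventually (\<lambda>m. \<forall>i\<ge>M. x m i = y m i) sequentially"
  shows "(\<lambda>m. Ds (x m) (y m)) \<longlonglongrightarrow> Ds x0 y0"
  unfolding Ds_def
proof (rule series_cont)
  fix j
  have px: "\<And>i. eventually (\<lambda>m. (shift ^^ j) (x m) i = (shift ^^ j) x0 i) sequentially"
    using assms(5) by (simp add: shift_pow)
  have py: "\<And>i. eventually (\<lambda>m. (shift ^^ j) (y m) i = (shift ^^ j) y0 i) sequentially"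
    using assms(6) by (simp add: shift_pow)
  show "(\<lambda>m. f ((shift ^^ j) (x m)) - f ((shift ^^ j) (y m))) \<longlonglongrightarrow> f ((shift ^^ j) x0) - f ((shift ^^ j) y0)"
    by (intro tendsto_diff f_pw[OF px] f_pw[OF py]) (use assms shift_pow_SFT in auto)
next
  show "eventually (\<lambda>m. \<forall>j. \<bar>f ((shift ^^ j) (x m)) - f ((shift ^^ j) (y m))\<bar> \<le> C * \<theta> ^ nat (int j - M)) sequentially"
  proof (rule eventually_mono[OF ag])
    fix m assume h: "\<forall>i\<ge>M. x m i = y m i"
    show "\<forall>j. \<bar>f ((shift ^^ j) (x m)) - f ((shift ^^ j) (y m))\<bar> \<le> C * \<theta> ^ nat (int j - M)"
      using stable_term[OF assms(1)[of m] assms(2)[of m] h[rule_format]] by blast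
  qed
qed

lemma Du_cont:
  assumes "\<And>m. x m \<in> SFT k A" "\<And>m. y m \<in> SFT k A" "x0 \<in> SFT k A" "y0 \<in> SFT k A"
    and "\<And>i. eventually (\<lambda>m. x m i = x0 i) sequentially" "\<And>i. eventually (\<lambda>m. y m i = y0 i) sequentially"
    and ag: "eventually (\<lambda>m. \<forall>i\<le>M. x m i = y m i) sequentially"
  shows "(\<lambda>m. Du (x m) (y m)) \<longlonglongrightarrow> Du x0 y0"
  unfolding Du_def
proof (rule series_cont)
  fix j
  have px: "\<And>i. eventually (\<lambda>m. shift_back (Suc j) (x m) i = shift_back (Suc j) x0 i) sequentially"
    using assms(5) by (simp add: shift_back_def)
  have py: "\<And>i. eventually (\<lambda>m. shift_back (Suc j) (y m) i = shift_back (Suc j) y0 i) sequentially"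
    using assms(6) by (simp add: shift_back_def)
  show "(\<lambda>m. f (shift_back (Suc j) (y m)) - f (shift_back (Suc j) (x m))) \<longlonglongrightarrow> f (shift_back (Suc j) y0) - f (shift_back (Suc j) x0)"
    by (intro tendsto_diff f_pw[OF py] f_pw[OF px]) (use assms shift_back_SFT in auto)
next
  show "eventually (\<lambda>m. \<forall>j. \<bar>f (shift_back (Suc j) (y m)) - f (shift_back (Suc j) (x m))\<bar> \<le> C * \<theta> ^ nat (int j - (- M - 1))) sequentially"
  proof (rule eventually_mono[OF ag])
    fix m assume h: "\<forall>i\<le>M. x m i = y m i"
    show "\<forall>j. \<bar>f (shift_back (Suc j) (y m)) - f (shift_back (Suc j) (x m))\<bar> \<le> C * \<theta> ^ nat (int j - (- M - 1))"
      using unstable_term[OF assms(1)[of m] assms(2)[of m] h[rule_format]] by blast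
  qed
qed

end


context ctx
begin

lemma ACN_sub: "fst p \<in> SFT k A \<Longrightarrow> ACN k A f N p \<subseteq> SFT k A \<times> UNIV"
proof
  fix q assume p: "fst p \<in> SFT k A" and "q \<in> ACN k A f N p"
  then obtain j where "(stp k A f N ^^ j) p q" by (auto simp: ACN_alt)
  then have "fst q \<in> SFT k A" using stp_pow_S p by blast
  then show "q \<in> SFT k A \<times> UNIV" by (cases q) auto
qed

lemma ACN_closed:
  assumes p: "fst p \<in> SFT k A"
  shows "closedin (SigmaR_top k A \<theta>) (ACN k A f N p)"
proof (rule closed_crit)
  show "ACN k A f N p \<subseteq> SFT k A \<times> UNIV" using ACN_sub[OF p] .
  fix q assume q: "q \<in> SFT k A \<times> UNIV"
    and near: "\<And>n. \<exists>q'\<in>ACN k A f N p. ag n (fst q) (fst q') \<and> \<bar>snd q' - snd q\<bar> < 1 / (real n + 1)"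
  obtain Q where Q: "\<And>n. Q n \<in> ACN k A f N p" "\<And>n. ag n (fst q) (fst (Q n))"
      "\<And>n. \<bar>snd (Q n) - snd q\<bar> < 1 / (real n + 1)"
    using near by metis
  have "\<forall>n. \<exists>P. P 0 = p \<and> P N = Q n \<and> (\<forall>l<N. stp k A f N (P l) (P (Suc l)))"
  proof
    fix n
    from Q(1)[of n] obtain j where "j \<le> N" "(stp k A f N ^^ j) p (Q n)" by (auto simp: ACN_alt)
    then have "(stp k A f N ^^ N) p (Q n)" using stp_pad p by blast
    then show "\<exists>P. P 0 = p \<and> P N = Q n \<and> (\<forall>l<N. stp k A f N (P l) (P (Suc l)))"
      by (simp add: relpowp_fun_conv)
  qed
  then obtain PP where PP: "\<And>n. PP n 0 = p" "\<And>n. PP n N = Q n"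
      "\<And>n l. l < N \<Longrightarrow> stp k A f N (PP n l) (PP n (Suc l))"
    by metis
  have PS: "fst (PP n l) \<in> SFT k A" if "l \<le> N" for n l
    using that
  proof (induction l)
    case 0 then show ?case using PP(1) p by simp
  next
    case (Suc l) then show ?case using PP(3)[of l n] stp_S by simp
  qed
  define Ts where "Ts n l = (PP n (Suc l) \<in> Wsn k A f (int N) (PP n l))" for n l
  have Tu: "PP n (Suc l) \<in> Wun k A f (int N) (PP n l)" if "l < N" "\<not> Ts n l" for n l
    using PP(3)[OF that(1), of n] that(2) by (auto simp: Ts_def stp_def)
  define W where "W n c = (case c of Inl (l, i) \<Rightarrow> (if l \<le> N then fst (PP n l) i else 0)
      | Inr l \<Rightarrow> (if Ts n l then 1 else 0))" for n and c :: "nat \<times> int + nat"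
  have Wb: "W n c < k + 2" for n c
  proof (cases c)
    case (Inl li)
    obtain l i where li: "li = (l, i)" by fastforce
    show ?thesis
    proof (cases "l \<le> N")
      case True
      then have "fst (PP n l) i < k" using PS[OF True, of n] by (simp add: SFT_def)
      then show ?thesis using Inl li True by (simp add: W_def)
    qed (use Inl li in \<open>simp add: W_def\<close>)
  qed (simp add: W_def)
  obtain r where r: "strict_mono r" "\<forall>c. \<exists>v. eventually (\<lambda>m. W (r m) c = v) sequentially"
    using diag_countable[of W "\<lambda>_. k + 2"] Wb by blast
  obtain V where V: "\<And>c. eventually (\<lambda>m. W (r m) c = V c) sequentially" using r(2) by metis
  define X where "X l = (\<lambda>i. V (Inl (l, i)))" for l
  define T where "T l = (V (Inr l) = 1)" for l
  have Xc: "eventually (\<lambda>m. fst (PP (r m) l) i = X l i) sequentially" if "l \<le> N" for l i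
    using V[of "Inl (l, i)"] that by (simp add: W_def X_def)
  have Tc: "eventually (\<lambda>m. Ts (r m) l = T l) sequentially" for l
    using V[of "Inr l"] by (rule eventually_mono) (auto simp: W_def T_def split: if_splits)
  have XS: "X l \<in> SFT k A" if "l \<le> N" for l
    by (rule pw_SFT[OF Xc[OF that]]) (use PS that in auto)
  have agS: "X (Suc l) i = X l i" if "l < N" "T l" "int N \<le> i" for l i
  proof -
    have "eventually (\<lambda>m. Ts (r m) l = T l \<and> fst (PP (r m) (Suc l)) i = X (Suc l) i \<and> fst (PP (r m) l) i = X l i) sequentially"
      using Tc[of l] Xc[of "Suc l" i] Xc[of l i] that by (auto intro: eventually_conj)
    then obtain N0 where "\<forall>m\<ge>N0. Ts (r m) l = T l \<and> fst (PP (r m) (Suc l)) i = X (Suc l) i \<and> fst (PP (r m) l) i = X l i"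
      unfolding eventually_sequentially by blast
    then have h: "Ts (r N0) l" "fst (PP (r N0) (Suc l)) i = X (Suc l) i" "fst (PP (r N0) l) i = X l i"
      using that by auto
    then have "fst (PP (r N0) (Suc l)) i = fst (PP (r N0) l) i" using that(3) by (simp add: Ts_def Wsn_iff)
    then show ?thesis using h by simp
  qed
  have agU: "X (Suc l) i = X l i" if "l < N" "\<not> T l" "i \<le> - int N" for l i
  proof -
    have "eventually (\<lambda>m. Ts (r m) l = T l \<and> fst (PP (r m) (Suc l)) i = X (Suc l) i \<and> fst (PP (r m) l) i = X l i) sequentially"
      using Tc[of l] Xc[of "Suc l" i] Xc[of l i] that by (auto intro: eventually_conj)
    then obtain N0 where "\<forall>m\<ge>N0. Ts (r m) l = T l \<and> fst (PP (r m) (Suc l)) i = X (Suc l) i \<and> fst (PP (r m) l) i = X l i"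
      unfolding eventually_sequentially by blast
    then have h: "\<not> Ts (r N0) l" "fst (PP (r N0) (Suc l)) i = X (Suc l) i" "fst (PP (r N0) l) i = X l i"
      using that by auto
    then have "fst (PP (r N0) (Suc l)) i = fst (PP (r N0) l) i" using that(3) Tu[OF that(1) h(1)] by (simp add: Wun_iff)
    then show ?thesis using h by simp
  qed
  define offn where "offn n l = (if Ts n l then Ds (fst (PP n l)) (fst (PP n (Suc l)))
      else Du (fst (PP n l)) (fst (PP n (Suc l))))" for n l
  define off where "off l = (if T l then Ds (X l) (X (Suc l)) else Du (X l) (X (Suc l)))" for l
  define rr where "rr l = snd p + (\<Sum>l'<l. off l')" for l
  have offm: "snd (PP n (Suc l)) = snd (PP n l) + offn n l" if "l < N" for n l
  proof (cases "Ts n l")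
    case True
    then have w: "PP n (Suc l) \<in> Wsn k A f (int N) (PP n l)" by (simp add: Ts_def)
    then have c1: "(\<lambda>m. birk f m (fst (PP n l)) - birk f m (fst (PP n (Suc l)))) \<longlonglongrightarrow> snd (PP n (Suc l)) - snd (PP n l)"
      by (simp add: Wsn_iff)
    have c2: "(\<lambda>m. birk f m (fst (PP n l)) - birk f m (fst (PP n (Suc l)))) \<longlonglongrightarrow> Ds (fst (PP n l)) (fst (PP n (Suc l)))"
      by (rule Ds_conv[of _ _ "int N"]) (use PS that w in \<open>auto simp: Wsn_iff\<close>)
    show ?thesis using LIMSEQ_unique[OF c1 c2] True by (simp add: offn_def)
  next
    case False
    then have w: "PP n (Suc l) \<in> Wun k A f (int N) (PP n l)" using Tu that by blast
    then have c1: "(\<lambda>m. birk f m (shift_back m (fst (PP n (Suc l)))) - birk f m (shift_back m (fst (PP n l)))) \<longlonglongrightarrow> snd (PP n (Suc l)) - snd (PP n l)"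
      by (simp add: Wun_iff)
    have c2: "(\<lambda>m. birk f m (shift_back m (fst (PP n (Suc l)))) - birk f m (shift_back m (fst (PP n l)))) \<longlonglongrightarrow> Du (fst (PP n l)) (fst (PP n (Suc l)))"
      by (rule Du_conv[of _ _ "- int N"]) (use PS that w in \<open>auto simp: Wun_iff\<close>)
    show ?thesis using LIMSEQ_unique[OF c1 c2] False by (simp add: offn_def)
  qed
  have offc: "(\<lambda>m. offn (r m) l) \<longlonglongrightarrow> off l" if "l < N" for l
  proof (cases "T l")
    case True
    have ev: "eventually (\<lambda>m. Ts (r m) l) sequentially" using Tc[of l] True by simp
    have "(\<lambda>m. Ds (fst (PP (r m) l)) (fst (PP (r m) (Suc l)))) \<longlonglongrightarrow> Ds (X l) (X (Suc l))"
    proof (rule Ds_cont[where M="int N"])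
      show "eventually (\<lambda>m. \<forall>i\<ge>int N. fst (PP (r m) l) i = fst (PP (r m) (Suc l)) i) sequentially"
        using ev by (rule eventually_mono) (auto simp: Ts_def Wsn_iff)
    qed (use PS XS Xc that in auto)
    moreover have "eventually (\<lambda>m. Ds (fst (PP (r m) l)) (fst (PP (r m) (Suc l))) = offn (r m) l) sequentially"
      using ev by (rule eventually_mono) (simp add: offn_def)
    ultimately show ?thesis using True by (simp add: off_def Lim_transform_eventually)
  next
    case False
    have ev: "eventually (\<lambda>m. \<not> Ts (r m) l) sequentially" using Tc[of l] False by simp
    have "(\<lambda>m. Du (fst (PP (r m) l)) (fst (PP (r m) (Suc l)))) \<longlonglongrightarrow> Du (X l) (X (Suc l))"
    proof (rule Du_cont[where M="- int N"])
      show "eventually (\<lambda>m. \<forall>i\<le>- int N. fst (PP (r m) l) i = fst (PP (r m) (Suc l)) i) sequentially"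
        using ev by (rule eventually_mono) (use Tu that in \<open>auto simp: Wun_iff\<close>)
    qed (use PS XS Xc that in auto)
    moreover have "eventually (\<lambda>m. Du (fst (PP (r m) l)) (fst (PP (r m) (Suc l))) = offn (r m) l) sequentially"
      using ev by (rule eventually_mono) (simp add: offn_def)
    ultimately show ?thesis using False by (simp add: off_def Lim_transform_eventually)
  qed
  have rrc: "(\<lambda>m. snd (PP (r m) l)) \<longlonglongrightarrow> rr l" if "l \<le> N" for l
    using that
  proof (induction l)
    case 0 then show ?case using PP(1) by (simp add: rr_def)
  next
    case (Suc l)
    then have l: "l < N" by simp
    have "(\<lambda>m. snd (PP (r m) l) + offn (r m) l) \<longlonglongrightarrow> rr l + off l"
      using Suc l offc by (intro tendsto_add) auto
    moreover have "rr (Suc l) = rr l + off l" by (simp add: rr_def)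
    ultimately show ?case using offm[OF l] by simp
  qed
  have Qc: "(\<lambda>n. snd (Q n)) \<longlonglongrightarrow> snd q"
  proof -
    have "(\<lambda>n. snd (Q n) - snd q) \<longlonglongrightarrow> 0"
    proof (rule Lim_null_comparison)
      show "eventually (\<lambda>n. norm (snd (Q n) - snd q) \<le> inverse (real (Suc n))) sequentially"
        using Q(3) by (intro always_eventually allI) (simp add: less_imp_le divide_inverse add.commute)
      show "(\<lambda>n. inverse (real (Suc n))) \<longlonglongrightarrow> 0" by (rule LIMSEQ_inverse_real_of_nat)
    qed
    then have "(\<lambda>n. snd (Q n) - snd q + snd q) \<longlonglongrightarrow> 0 + snd q" by (intro tendsto_add) auto
    then show ?thesis by simp
  qed
  have rrN: "rr N = snd q"
  proof -
    have "(\<lambda>m. snd (PP (r m) N)) \<longlonglongrightarrow> snd q"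
      using LIMSEQ_subseq_LIMSEQ[OF Qc r(1)] PP(2) by (simp add: o_def)
    then show ?thesis using rrc[of N] LIMSEQ_unique by auto
  qed
  have XN: "X N = fst q"
  proof
    fix i
    have "eventually (\<lambda>m. fst (PP (r m) N) i = X N i \<and> m \<ge> nat \<bar>i\<bar> + 1) sequentially"
      using Xc[of N i] by (auto intro: eventually_conj eventually_ge_at_top)
    then obtain m where m: "fst (PP (r m) N) i = X N i" "m \<ge> nat \<bar>i\<bar> + 1"
      unfolding eventually_sequentially by blast
    have "r m \<ge> m" using r(1) by (rule seq_suble)
    then have "\<bar>i\<bar> < int (r m)" using m(2) by linarith
    then have "fst q i = fst (Q (r m)) i" using Q(2)[of "r m"] by (simp add: ag_def)
    then show "X N i = fst q i" using m(1) PP(2) by simp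
  qed
  have X0: "X 0 = fst p"
  proof
    fix i
    obtain m where "fst (PP (r m) 0) i = X 0 i"
      using Xc[of 0 i] unfolding eventually_sequentially by auto
    then show "X 0 i = fst p i" using PP(1) by simp
  qed
  have "(stp k A f N ^^ N) p q"
    unfolding relpowp_fun_conv
  proof (intro exI conjI allI impI)
    show "(X 0, rr 0) = p" using X0 by (simp add: rr_def)
    show "(X N, rr N) = q" using XN rrN by simp
    fix l assume l: "l < N"
    show "stp k A f N (X l, rr l) (X (Suc l), rr (Suc l))"
    proof (cases "T l")
      case True
      have ag: "\<And>i. int N \<le> i \<Longrightarrow> X l i = X (Suc l) i" using agS[OF l True] by simp
      have "(\<lambda>n. birk f n (X l) - birk f n (X (Suc l))) \<longlonglongrightarrow> Ds (X l) (X (Suc l))"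
        by (rule Ds_conv[OF XS XS ag]) (use l in auto)
      moreover have "rr (Suc l) - rr l = Ds (X l) (X (Suc l))" using True by (simp add: rr_def off_def)
      moreover have "\<exists>m. \<forall>i\<ge>m. X (Suc l) i = X l i" using ag by (intro exI[of _ "int N"]) auto
      ultimately have "(X (Suc l), rr (Suc l)) \<in> Wsn k A f (int N) (X l, rr l)"
        unfolding Wsn_iff using XS[of "Suc l"] l ag by auto
      then show ?thesis by (simp add: stp_def)
    next
      case False
      have ag: "\<And>i. i \<le> - int N \<Longrightarrow> X l i = X (Suc l) i" using agU[OF l False] by simp
      have "(\<lambda>n. birk f n (shift_back n (X (Suc l))) - birk f n (shift_back n (X l))) \<longlonglongrightarrow> Du (X l) (X (Suc l))"
        by (rule Du_conv[OF XS XS ag]) (use l in auto)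
      moreover have "rr (Suc l) - rr l = Du (X l) (X (Suc l))" using False by (simp add: rr_def off_def)
      moreover have "\<exists>m. \<forall>i\<le>m. X (Suc l) i = X l i" using ag by (intro exI[of _ "- int N"]) auto
      ultimately have "(X (Suc l), rr (Suc l)) \<in> Wun k A f (int N) (X l, rr l)"
        unfolding Wun_iff using XS[of "Suc l"] l ag by auto
      then show ?thesis by (simp add: stp_def)
    qed
  qed
  then show "q \<in> ACN k A f N p" by (auto simp: ACN_alt)
qed

end


context ctx
begin

lemma ACN_mono: "N \<le> N' \<Longrightarrow> ACN k A f N p \<subseteq> ACN k A f N' p"
proof
  fix q assume NN: "N \<le> N'" and "q \<in> ACN k A f N p"
  then obtain j where j: "j \<le> N" "(stp k A f N ^^ j) p q" by (auto simp: ACN_alt)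
  then have "(stp k A f N' ^^ j) p q" using stp_pow_mono[OF NN] by blast
  moreover have "j \<le> N'" using j NN by simp
  ultimately show "q \<in> ACN k A f N' p" unfolding ACN_alt by blast
qed

lemma bracket:
  assumes q: "fst q \<in> SFT k A" and e: "e > 0"
  shows "\<exists>R \<delta>. \<delta> > 0 \<and> (\<forall>q'. fst q' \<in> SFT k A \<and> ag R (fst q) (fst q') \<and> \<bar>snd q' - snd q\<bar> < \<delta> \<longrightarrow>
           (\<exists>\<tau>. \<bar>\<tau>\<bar> < e \<and> (stp k A f R ^^ 2) (tr \<tau> q) q'))"
proof -
  have pos: "e * (1 - \<theta>) / (3 * (C + 1)) > 0" using e th1 C0 by auto
  obtain n where n: "\<theta> ^ n < e * (1 - \<theta>) / (3 * (C + 1))" using real_arch_pow_inv[OF pos th1] by blast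
  have Cb: "C * \<theta> ^ n / (1 - \<theta>) < e / 3"
  proof -
    have "C * \<theta> ^ n \<le> (C + 1) * \<theta> ^ n" using th0 by simp
    also have "\<dots> < (C + 1) * (e * (1 - \<theta>) / (3 * (C + 1)))" using n C0 by (intro mult_strict_left_mono) auto
    also have "\<dots> = e * (1 - \<theta>) / 3"
    proof -
      have "C + 1 > 0" using C0 by simp
      then show ?thesis by (simp add: field_simps)
    qed
    finally have "C * \<theta> ^ n < e * (1 - \<theta>) / 3" .
    then show ?thesis using th1 by (simp add: divide_simps mult.commute)
  qed
  define R where "R = n + 2"
  have R2: "R \<ge> 2" by (simp add: R_def)
  show ?thesis
  proof (rule exI[of _ R], rule exI[of _ "e / 3"], intro conjI allI impI)
    show "e / 3 > 0" using e by simp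
    fix q' assume h: "fst q' \<in> SFT k A \<and> ag R (fst q) (fst q') \<and> \<bar>snd q' - snd q\<bar> < e / 3"
    obtain y t where qq: "q = (y, t)" by fastforce
    obtain y' t' where qq': "q' = (y', t')" by fastforce
    have yS: "y \<in> SFT k A" using q qq by simp
    have y'S: "y' \<in> SFT k A" using h qq' by simp
    have agy: "\<And>i. \<bar>i\<bar> < int R \<Longrightarrow> y i = y' i" using h qq qq' by (simp add: ag_def)
    have tt: "\<bar>t' - t\<bar> < e / 3" using h qq qq' by simp
    define z where "z = (\<lambda>i. if i < 0 then y' i else y i)"
    have zS: "z \<in> SFT k A"
      unfolding SFT_def
    proof (intro CollectI allI)
      fix i
      have a: "y i < k \<and> A (y i) (y (i + 1))" "y' i < k \<and> A (y' i) (y' (i + 1))"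
        using yS y'S by (auto simp: SFT_def)
      have m1: "y' (-1) = y (-1)" using agy[of "-1"] unfolding R_def by simp
      consider "i + 1 < 0" | "i = -1" | "i \<ge> 0" by linarith
      then show "z i < k \<and> A (z i) (z (i + 1))"
      proof cases
        case 1 then show ?thesis using a by (simp add: z_def)
      next
        case 2 then show ?thesis using a m1 by (simp add: z_def)
      next
        case 3 then show ?thesis using a by (simp add: z_def)
      qed
    qed
    have agz1: "\<And>i. 1 - int R \<le> i \<Longrightarrow> y i = z i"
    proof -
      fix i :: int assume "1 - int R \<le> i"
      then show "y i = z i" using agy[of i] by (cases "i < 0") (auto simp: z_def)
    qed
    have agz2: "\<And>i. i \<le> int R - 1 \<Longrightarrow> z i = y' i"
    proof -
      fix i :: int assume "i \<le> int R - 1"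
      then show "z i = y' i" using agy[of i] by (cases "i < 0") (auto simp: z_def)
    qed
    have m0: "1 - int R \<le> 0" using R2 by linarith
    have Dsb: "\<bar>Ds y z\<bar> \<le> C * \<theta> ^ nat (- (1 - int R)) / (1 - \<theta>)"
      using Ds_bound[OF yS zS agz1 m0] .
    have Dub: "\<bar>Du z y'\<bar> \<le> C * \<theta> ^ nat (int R - 1 + 1) / (1 - \<theta>)"
    proof -
      have m1: "- (int R - 1) - 1 \<le> (0::int)" by simp
      show ?thesis using Du_bound[OF zS y'S agz2 m1] .
    qed
    have p1: "\<theta> ^ nat (- (1 - int R)) \<le> \<theta> ^ n" using th0 th1 by (intro power_decreasing) (auto simp: R_def)
    have p2: "\<theta> ^ nat (int R - 1 + 1) \<le> \<theta> ^ n" using th0 th1 by (intro power_decreasing) (auto simp: R_def)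
    have "C * \<theta> ^ nat (- (1 - int R)) / (1 - \<theta>) \<le> C * \<theta> ^ n / (1 - \<theta>)"
      using p1 C0 th1 by (intro divide_right_mono mult_left_mono) auto
    then have D1: "\<bar>Ds y z\<bar> < e / 3" using Dsb Cb by linarith
    have "C * \<theta> ^ nat (int R - 1 + 1) / (1 - \<theta>) \<le> C * \<theta> ^ n / (1 - \<theta>)"
      using p2 C0 th1 by (intro divide_right_mono mult_left_mono) auto
    then have D2: "\<bar>Du z y'\<bar> < e / 3" using Dub Cb by linarith
    define \<tau> where "\<tau> = t' - t - Ds y z - Du z y'"
    have tau_e: "\<bar>\<tau>\<bar> < e" using D1 D2 tt unfolding \<tau>_def by linarith
    have "(stp k A f R ^^ 2) (tr \<tau> q) q'"
    proof -
      have s1: "stp k A f R (y, t + \<tau>) (z, t + \<tau> + Ds y z)"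
      proof -
        have "(\<lambda>n. birk f n y - birk f n z) \<longlonglongrightarrow> Ds y z" by (rule Ds_conv[OF yS zS agz1])
        moreover have "\<exists>m. \<forall>i\<ge>m. z i = y i" by (intro exI[of _ 0]) (simp add: z_def)
        moreover have "\<forall>i\<ge>int R. z i = y i" by (simp add: z_def)
        ultimately have "(z, t + \<tau> + Ds y z) \<in> Wsn k A f (int R) (y, t + \<tau>)"
          unfolding Wsn_iff using zS by simp
        then show ?thesis by (simp add: stp_def)
      qed
      have s2: "stp k A f R (z, t + \<tau> + Ds y z) (y', t')"
      proof -
        have "(\<lambda>n. birk f n (shift_back n y') - birk f n (shift_back n z)) \<longlonglongrightarrow> Du z y'"
          by (rule Du_conv[OF zS y'S agz2])
        moreover have "Du z y' = t' - (t + \<tau> + Ds y z)" by (simp add: \<tau>_def)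
        moreover have "\<exists>m. \<forall>i\<le>m. y' i = z i" by (intro exI[of _ "-1"]) (simp add: z_def)
        moreover have "\<forall>i\<le>- int R. y' i = z i" by (simp add: z_def R_def)
        ultimately have "(y', t') \<in> Wun k A f (int R) (z, t + \<tau> + Ds y z)"
          unfolding Wun_iff using y'S by simp
        then show ?thesis by (simp add: stp_def)
      qed
      have "(stp k A f R ^^ Suc (Suc 0)) (y, t + \<tau>) (y', t')"
      proof -
        have "(stp k A f R ^^ 0) (y, t + \<tau>) (y, t + \<tau>)" by simp
        then have "(stp k A f R ^^ Suc 0) (y, t + \<tau>) (z, t + \<tau> + Ds y z)" using s1 by (rule relpowp_Suc_I)
        then show ?thesis using s2 by (rule relpowp_Suc_I)
      qed
      then show "(stp k A f R ^^ 2) (tr \<tau> q) q'" by (simp add: numeral_2_eq_2 qq qq' tr_def)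
    qed
    then show "\<exists>\<tau>. \<bar>\<tau>\<bar> < e \<and> (stp k A f R ^^ 2) (tr \<tau> q) q'" using tau_e by blast
  qed
qed

lemma baire_part:
  assumes Kc: "compactin (SigmaR_top k A \<theta>) K"
    and Kcl: "(SigmaR_top k A \<theta>) closure_of ((SigmaR_top k A \<theta>) interior_of K) = K"
    and p: "fst p \<in> SFT k A" and KAC: "K \<subseteq> AC k A f p" and Kne: "K \<noteq> {}"
  shows "\<exists>u N e. e > 0 \<and> (\<forall>\<tau>. \<bar>\<tau>\<bar> < e \<longrightarrow> tr \<tau> u \<in> ACN k A f N p)"
proof -
  let ?X = "SigmaR_top k A \<theta>"
  let ?XK = "subtopology ?X K"
  have Ksub: "K \<subseteq> topspace ?X" using Kc by (rule compactin_subset_topspace)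
  have cs: "compact_space ?XK" using Kc by (rule compact_space_subtopology)
  have hs: "Hausdorff_space ?XK" by (rule Hausdorff_space_subtopology[OF Hausdorff_X])
  have sp: "completely_metrizable_space ?XK \<or> locally_compact_space ?XK \<and> regular_space ?XK"
    using cs hs compact_imp_locally_compact_space compact_Hausdorff_imp_regular_space by blast
  have topK: "topspace ?XK = K" using Ksub by (rule topspace_subtopology_subset)
  have UK: "\<Union> (range (\<lambda>N. ACN k A f N p \<inter> K)) = K"
  proof
    show "K \<subseteq> \<Union> (range (\<lambda>N. ACN k A f N p \<inter> K))"
    proof
      fix q assume qK: "q \<in> K"
      then have "(rel k A f)\<^sup>*\<^sup>* p q" using KAC by (auto simp: AC_alt)
      then obtain M j where "(stp k A f M ^^ j) p q" using rtr_stp by blast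
      then have "(stp k A f (max M j) ^^ j) p q" using stp_pow_mono by (metis max.cobounded1)
      moreover have "j \<le> max M j" by simp
      ultimately have "q \<in> ACN k A f (max M j) p" unfolding ACN_alt by blast
      then show "q \<in> \<Union> (range (\<lambda>N. ACN k A f N p \<inter> K))" using qK by blast
    qed
  qed auto
  have "\<exists>N. ?XK interior_of (ACN k A f N p \<inter> K) \<noteq> {}"
  proof (rule ccontr)
    assume "\<not> ?thesis"
    then have e: "\<And>N. ?XK interior_of (ACN k A f N p \<inter> K) = {}" by blast
    have "?XK interior_of \<Union> (range (\<lambda>N. ACN k A f N p \<inter> K)) = {}"
    proof (rule Baire_category_alt[OF sp])
      show "countable (range (\<lambda>N. ACN k A f N p \<inter> K))" by simp
      fix T assume "T \<in> range (\<lambda>N. ACN k A f N p \<inter> K)"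
      then obtain N where T: "T = ACN k A f N p \<inter> K" by blast
      have "closedin ?XK T" unfolding closedin_subtopology T using ACN_closed[OF p] by blast
      then show "closedin ?XK T \<and> ?XK interior_of T = {}" using e T by simp
    qed
    then have "K = {}" using UK topK by (metis interior_of_topspace)
    then show False using Kne by simp
  qed
  then obtain N w where w: "w \<in> ?XK interior_of (ACN k A f N p \<inter> K)" by blast
  have "openin ?XK (?XK interior_of (ACN k A f N p \<inter> K))" by (rule openin_interior_of)
  then obtain T where T: "openin ?X T" "?XK interior_of (ACN k A f N p \<inter> K) = T \<inter> K"
    unfolding openin_subtopology by blast
  have TK: "T \<inter> K \<subseteq> ACN k A f N p" using T(2) interior_of_subset[of ?XK "ACN k A f N p \<inter> K"] by blast
  have wT: "w \<in> T" "w \<in> K" using w T(2) by auto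
  then have "w \<in> ?X closure_of (?X interior_of K)" using Kcl by simp
  then obtain u where u: "u \<in> ?X interior_of K" "u \<in> T" using wT T(1) unfolding in_closure_of by blast
  have O: "openin ?X (T \<inter> ?X interior_of K)" using T(1) by (intro openin_Int openin_interior_of)
  have "u \<in> T \<inter> ?X interior_of K" using u by blast
  then obtain n e where ne: "e > 0" "cyl n (fst u) e (snd u) \<subseteq> T \<inter> ?X interior_of K"
    using open_has_cyl[OF O] by blast
  have uS: "fst u \<in> SFT k A" using u(1) interior_of_subset[of ?X K] Ksub topX by auto
  show ?thesis
  proof (intro exI conjI allI impI)
    show "e > 0" by (rule ne(1))
    fix \<tau> :: real assume "\<bar>\<tau>\<bar> < e"
    then have "tr \<tau> u \<in> cyl n (fst u) e (snd u)" using uS by (simp add: cyl_def tr_def mem_Times_iff)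
    then have "tr \<tau> u \<in> T \<inter> K" using ne(2) interior_of_subset[of ?X K] by blast
    then show "tr \<tau> u \<in> ACN k A f N p" using TK by blast
  qed
qed

lemma main:
  assumes Kc: "compactin (SigmaR_top k A \<theta>) K"
    and Kcl: "(SigmaR_top k A \<theta>) closure_of ((SigmaR_top k A \<theta>) interior_of K) = K"
    and p: "fst p \<in> SFT k A" and KAC: "K \<subseteq> AC k A f p"
  shows "\<exists>N. K \<subseteq> ACN k A f N p"
proof (cases "K = {}")
  case True then show ?thesis by simp
next
  case False
  let ?X = "SigmaR_top k A \<theta>"
  obtain u N0 e where ue: "e > 0" "\<And>\<tau>. \<bar>\<tau>\<bar> < e \<Longrightarrow> tr \<tau> u \<in> ACN k A f N0 p"
    using baire_part[OF Kc Kcl p KAC False] by blast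
  have u0: "u \<in> ACN k A f N0 p" using ue(2)[of 0] ue(1) by (simp add: tr_def)
  have Ksub: "K \<subseteq> SFT k A \<times> UNIV" using compactin_subset_topspace[OF Kc] topX by simp
  have cover: "\<exists>V. openin ?X V \<and> q \<in> V \<and> (\<exists>L. V \<subseteq> ACN k A f L p)" if qK: "q \<in> K" for q
  proof -
    have "(rel k A f)\<^sup>*\<^sup>* p q" using KAC qK by (auto simp: AC_alt)
    moreover obtain j0 where "(stp k A f N0 ^^ j0) p u" using u0 by (auto simp: ACN_alt)
    then have "(rel k A f)\<^sup>*\<^sup>* u p" using stp_pow_rel rel_rtr_sym p by blast
    ultimately have "(rel k A f)\<^sup>*\<^sup>* u q" by simp
    then obtain M j where Mj: "(stp k A f M ^^ j) u q" using rtr_stp by blast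
    have qS: "fst q \<in> SFT k A" using qK Ksub by auto
    obtain R \<delta> where R: "\<delta> > 0" "\<And>q'. fst q' \<in> SFT k A \<and> ag R (fst q) (fst q') \<and> \<bar>snd q' - snd q\<bar> < \<delta> \<Longrightarrow>
           (\<exists>\<tau>. \<bar>\<tau>\<bar> < e \<and> (stp k A f R ^^ 2) (tr \<tau> q) q')"
      using bracket[OF qS ue(1)] by blast
    define L where "L = N0 + j + 2 + M + R"
    show ?thesis
    proof (intro exI conjI)
      show "openin ?X (cyl R (fst q) \<delta> (snd q))" by (rule open_cyl)
      show "q \<in> cyl R (fst q) \<delta> (snd q)" using qS R(1) by (cases q) (simp add: cyl_def)
      show "cyl R (fst q) \<delta> (snd q) \<subseteq> ACN k A f L p"
      proof
        fix q' assume "q' \<in> cyl R (fst q) \<delta> (snd q)"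
        then have "fst q' \<in> SFT k A \<and> ag R (fst q) (fst q') \<and> \<bar>snd q' - snd q\<bar> < \<delta>"
          by (cases q') (simp add: cyl_def)
        then obtain \<tau> where \<tau>: "\<bar>\<tau>\<bar> < e" "(stp k A f R ^^ 2) (tr \<tau> q) q'" using R(2) by blast
        obtain j1 where j1: "j1 \<le> N0" "(stp k A f N0 ^^ j1) p (tr \<tau> u)" using ue(2)[OF \<tau>(1)] by (auto simp: ACN_alt)
        have a1: "(stp k A f L ^^ j1) p (tr \<tau> u)" using j1(2) stp_pow_mono[of N0 L] by (simp add: L_def)
        have a2: "(stp k A f L ^^ j) (tr \<tau> u) (tr \<tau> q)" using stp_pow_tr[OF Mj] stp_pow_mono[of M L] by (simp add: L_def)
        have a3: "(stp k A f L ^^ 2) (tr \<tau> q) q'" using \<tau>(2) stp_pow_mono[of R L] by (simp add: L_def)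
        have "(stp k A f L ^^ (j1 + j + 2)) p q'"
          unfolding relpowp_add using a1 a2 a3 by blast
        moreover have "j1 + j + 2 \<le> L" using j1(1) by (simp add: L_def)
        ultimately show "q' \<in> ACN k A f L p" unfolding ACN_alt by blast
      qed
    qed
  qed
  define \<U> where "\<U> = {V. openin ?X V \<and> (\<exists>L. V \<subseteq> ACN k A f L p)}"
  have "K \<subseteq> \<Union>\<U>" using cover unfolding \<U>_def by blast
  moreover have "\<forall>U\<in>\<U>. openin ?X U" unfolding \<U>_def by blast
  ultimately obtain \<F> where F: "finite \<F>" "\<F> \<subseteq> \<U>" "K \<subseteq> \<Union>\<F>" using Kc unfolding compactin_def by meson
  then have "\<forall>V\<in>\<F>. \<exists>L. V \<subseteq> ACN k A f L p" unfolding \<U>_def by blast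
  then obtain g where g: "\<And>V. V \<in> \<F> \<Longrightarrow> V \<subseteq> ACN k A f (g V) p" by metis
  have "K \<subseteq> ACN k A f (\<Sum>V\<in>\<F>. g V) p"
  proof
    fix q assume "q \<in> K"
    then obtain V where V: "V \<in> \<F>" "q \<in> V" using F(3) by blast
    have "g V \<le> (\<Sum>V\<in>\<F>. g V)" by (rule member_le_sum[OF V(1)]) (use F(1) in auto)
    then show "q \<in> ACN k A f (\<Sum>V\<in>\<F>. g V) p" using ACN_mono g[OF V(1)] V(2) by blast
  qed
  then show ?thesis by blast
qed

end

theorem proposition9p4:
  fixes k :: nat and A :: "nat \<Rightarrow> nat \<Rightarrow> bool" and \<theta> :: real
    and f :: "(int \<Rightarrow> nat) \<Rightarrow> real"
    and K :: "((int \<Rightarrow> nat) \<times> real) set" and p :: "(int \<Rightarrow> nat) \<times> real"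
  assumes "0 < \<theta>" and "\<theta> < 1"
    and "\<exists>C. \<forall>x\<in>SFT k A. \<forall>y\<in>SFT k A. \<bar>f x - f y\<bar> \<le> C * dtheta \<theta> x y"
    and "compactin (SigmaR_top k A \<theta>) K"
    and "(SigmaR_top k A \<theta>) closure_of ((SigmaR_top k A \<theta>) interior_of K) = K"
    and "p \<in> SFT k A \<times> UNIV"
    and "K \<subseteq> AC k A f p"
  shows "\<exists>N. K \<subseteq> ACN k A f N p"
proof -
  obtain C where C: "\<forall>x\<in>SFT k A. \<forall>y\<in>SFT k A. \<bar>f x - f y\<bar> \<le> C * dtheta \<theta> x y" using assms(3) by blast
  interpret c: ctx k A \<theta> f "max C 0"
  proof
    show "0 < \<theta>" "\<theta> < 1" by (fact assms(1)) (fact assms(2))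
    show "0 \<le> max C 0" by simp
    fix x y assume xy: "x \<in> SFT k A" "y \<in> SFT k A"
    have "0 \<le> dtheta \<theta> x y" using assms(1) by (rule dtheta_nonneg)
    then have "C * dtheta \<theta> x y \<le> max C 0 * dtheta \<theta> x y" by (intro mult_right_mono) auto
    then show "\<bar>f x - f y\<bar> \<le> max C 0 * dtheta \<theta> x y" using C xy by fastforce
  qed
  show ?thesis
    by (rule c.main[OF assms(4) assms(5) _ assms(7)]) (use assms(6) in auto)
qed



end
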